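(* Let $\Gamma=(U\cup V,E)$ be a $3$-regular bipartite graph with bipartition $U,V$, let $m=|U|=|V|$ and $n=10m$, and let $\hat\Gamma$, $X$, $Y$, $\eta$, $\eta'$, $M$ be as described in the context. Then $$\det(M)=|\{\mu\in \mathrm{UMatch}(\hat\Gamma): \mathrm{sgn}(\mu)=1\}|-|\{\mu\in \mathrm{UMatch}(\hat\Gamma): \mathrm{sgn}(\mu)=-1\}|,$$ where $\mathrm{UMatch}(\hat\Gamma)$ is the set of uniform perfect matchings of $\hat\Gamma$.
   Context: Construction of $\hat\Gamma$: for each vertex $v$ of $\Gamma$ with neighbours $x,y,z$, there are four inner vertices $a_{v,S}$, one for each subset $S\subseteq\{x,y,z\}$ of even size (write $I_v$ for this set), and six outer vertices $b_{v,u,0},b_{v,u,1}$ for $u\in\{x,y,z\}$ (write $O_v$ for this set). Within the gadget, $a_{v,S}$ is adjacent to $b_{v,u,1}$ if $u\in S$ and to $b_{v,u,0}$ if $u\notin S$. For each edge $e=\{u,v\}\in E$ and $i\in\{0,1\}$ there is an edge $e_i$ of $\hat\Gamma$ joining $b_{v,u,i}$ and $b_{u,v,i}$. There are no other edges. Let $X=\bigcup_{v\in U}I_v\cup\bigcup_{v\in V}O_v$ and $Y=\bigcup_{v\in V}I_v\cup\bigcup_{v\in U}O_v$; every edge of $\hat\Gamma$ joins $X$ and $Y$, and $|X|=|Y|=n$. Fix bijections $\eta:X\to[n]$ and $\eta':Y\to[n]$, and let $M$ be the $n\times n$ $\{0,1\}$-matrix with $M(\eta(x),\eta'(y))=1$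 iff $x$ and $y$ are adjacent in $\hat\Gamma$. A perfect matching of $\hat\Gamma$ is identified with a bijection $\mu:X\to Y$ such that $\mu(x)$ is adjacent to $x$ for all $x\in X$; its sign $\mathrm{sgn}(\mu)$ is the sign of the permutation $\eta'\circ\mu\circ\eta^{-1}$ of $[n]$. A perfect matching $\mu$ is uniform if for every $e\in E$ at most one of $e_0,e_1$ belongs to $\mu$. *)

theory Defs
  imports "Jordan_Normal_Form.Determinant" "HOL-Library.FuncSet"
begin

text \<open>Vertices of the gadget graph: inner vertices a_{v,S} and outer vertices
  b_{v,u,i}; the index i in {0,1} is encoded as a bool (False = 0, True = 1).\<close>
datatype 'v hvert = InnerV 'v "'v set" | OuterV 'v 'v bool

definition nbrs :: "('v \<Rightarrow> 'v \<Rightarrow> bool) \<Rightarrow> 'v \<Rightarrow> 'v set" where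
  "nbrs E v = {u. E v u}"

definition cubic_bipartite :: "'v set \<Rightarrow> 'v set \<Rightarrow> ('v \<Rightarrow> 'v \<Rightarrow> bool) \<Rightarrow> bool" where
  "cubic_bipartite U V E \<longleftrightarrow> finite U \<and> finite V \<and> U \<inter> V = {} \<and>
     (\<forall>u v. E u v \<longrightarrow> E v u) \<and>
     (\<forall>u v. E u v \<longrightarrow> (u \<in> U \<and> v \<in> V) \<or> (u \<in> V \<and> v \<in> U)) \<and>
     (\<forall>v \<in> U \<union> V. card (nbrs E v) = 3)"

definition inner_set :: "('v \<Rightarrow> 'v \<Rightarrow> bool) \<Rightarrow> 'v \<Rightarrow> 'v hvert set" where
  "inner_set E v = {InnerV v S | S. S \<subseteq> nbrs E v \<and> even (card S)}"

definition outer_set :: "('v \<Rightarrow> 'v \<Rightarrow> bool) \<Rightarrow> 'v \<Rightarrow> 'v hvert set" where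
  "outer_set E v = {OuterV v u i | u i. u \<in> nbrs E v}"

definition Xset :: "'v set \<Rightarrow> 'v set \<Rightarrow> ('v \<Rightarrow> 'v \<Rightarrow> bool) \<Rightarrow> 'v hvert set" where
  "Xset U V E = (\<Union>v\<in>U. inner_set E v) \<union> (\<Union>v\<in>V. outer_set E v)"

definition Yset :: "'v set \<Rightarrow> 'v set \<Rightarrow> ('v \<Rightarrow> 'v \<Rightarrow> bool) \<Rightarrow> 'v hvert set" where
  "Yset U V E = (\<Union>v\<in>V. inner_set E v) \<union> (\<Union>v\<in>U. outer_set E v)"

definition gadj0 :: "('v \<Rightarrow> 'v \<Rightarrow> bool) \<Rightarrow> 'v hvert \<Rightarrow> 'v hvert \<Rightarrow> bool" where
  "gadj0 E x y \<longleftrightarrow>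
     (\<exists>v S u i. x = InnerV v S \<and> y = OuterV v u i \<and>
        S \<subseteq> nbrs E v \<and> even (card S) \<and> u \<in> nbrs E v \<and> (i \<longleftrightarrow> u \<in> S)) \<or>
     (\<exists>v u i. x = OuterV v u i \<and> y = OuterV u v i \<and> E u v)"

definition hadj :: "('v \<Rightarrow> 'v \<Rightarrow> bool) \<Rightarrow> 'v hvert \<Rightarrow> 'v hvert \<Rightarrow> bool" where
  "hadj E x y \<longleftrightarrow> gadj0 E x y \<or> gadj0 E y x"

text \<open>Biadjacency matrix M (indices 0..<n instead of 1..n).\<close>
definition biadj_matrix :: "'v set \<Rightarrow> 'v set \<Rightarrow> ('v \<Rightarrow> 'v \<Rightarrow> bool) \<Rightarrow> nat \<Rightarrow>
    ('v hvert \<Rightarrow> nat) \<Rightarrow> ('v hvert \<Rightarrow> nat) \<Rightarrow> int mat" where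
  "biadj_matrix U V E n \<eta> \<eta>' = mat n n (\<lambda>(i, j).
     if hadj E (the_inv_into (Xset U V E) \<eta> i) (the_inv_into (Yset U V E) \<eta>' j) then 1 else 0)"

text \<open>Perfect matchings as bijections X \<rightarrow> Y (extensional outside X).\<close>
definition perfect_matchings :: "'v set \<Rightarrow> 'v set \<Rightarrow> ('v \<Rightarrow> 'v \<Rightarrow> bool) \<Rightarrow>
    ('v hvert \<Rightarrow> 'v hvert) set" where
  "perfect_matchings U V E = {\<mu> \<in> Xset U V E \<rightarrow>\<^sub>E Yset U V E.
     bij_betw \<mu> (Xset U V E) (Yset U V E) \<and> (\<forall>x \<in> Xset U V E. hadj E x (\<mu> x))}"

definition in_matching :: "'v hvert set \<Rightarrow> ('v hvert \<Rightarrow> 'v hvert) \<Rightarrow> 'v hvert \<Rightarrow> 'v hvert \<Rightarrow> bool" where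
  "in_matching X \<mu> a b \<longleftrightarrow> (a \<in> X \<and> \<mu> a = b) \<or> (b \<in> X \<and> \<mu> b = a)"

definition uniform_matchings :: "'v set \<Rightarrow> 'v set \<Rightarrow> ('v \<Rightarrow> 'v \<Rightarrow> bool) \<Rightarrow>
    ('v hvert \<Rightarrow> 'v hvert) set" where
  "uniform_matchings U V E = {\<mu> \<in> perfect_matchings U V E.
     \<forall>u v. E u v \<longrightarrow>
       \<not> (in_matching (Xset U V E) \<mu> (OuterV v u False) (OuterV u v False) \<and>
          in_matching (Xset U V E) \<mu> (OuterV v u True) (OuterV u v True))}"

definition matching_sign :: "'v set \<Rightarrow> 'v set \<Rightarrow> ('v \<Rightarrow> 'v \<Rightarrow> bool) \<Rightarrow> nat \<Rightarrow>
    ('v hvert \<Rightarrow> nat) \<Rightarrow> ('v hvert \<Rightarrow> nat) \<Rightarrow> ('v hvert \<Rightarrow> 'v hvert) \<Rightarrow> int" where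
  "matching_sign U V E n \<eta> \<eta>' \<mu> =
     sign (\<lambda>i. if i < n then \<eta>' (\<mu> (the_inv_into (Xset U V E) \<eta> i)) else i)"

end

theory Submission
  imports Defs
begin

lemma prod_01:
  "finite A \<Longrightarrow> (\<Prod>i\<in>A. (if P i then 1 else 0 :: int)) = (if \<forall>i\<in>A. P i then 1 else 0)"
  by (induction A rule: finite_induct) auto

definition cand :: "('v \<Rightarrow> 'v \<Rightarrow> bool) \<Rightarrow> 'v \<Rightarrow> 'v \<Rightarrow> 'v set \<Rightarrow> 'v hvert set" where
  "cand E u v S = {OuterV u t (t \<in> S) | t. t \<in> nbrs E u \<and> t \<noteq> v}"

fun innerS :: "'v hvert \<Rightarrow> 'v set" where
  "innerS (InnerV w S) = S" | "innerS (OuterV a b c) = {}"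

definition flip :: "('v \<Rightarrow> 'v \<Rightarrow> bool) \<Rightarrow> 'v \<Rightarrow> 'v \<Rightarrow> ('v hvert \<Rightarrow> 'v hvert) \<Rightarrow> 'v hvert \<Rightarrow> 'v hvert" where
  "flip E u v \<mu> z = (if z \<in> inner_set E u then the_elem (cand E u v (innerS z) - {\<mu> z}) else \<mu> z)"

lemma cand_eq: "nbrs E u = {v,x,y} \<Longrightarrow> x \<noteq> v \<Longrightarrow> y \<noteq> v \<Longrightarrow>
  cand E u v S = {OuterV u x (x \<in> S), OuterV u y (y \<in> S)}"
  unfolding cand_def by auto

lemma even_sub3:
  assumes "S \<subseteq> {v,x,y}" "v \<noteq> x" "v \<noteq> y" "x \<noteq> y" "even (card S)"
  shows "S = {} \<or> S = {x,y} \<or> S = {v,x} \<or> S = {v,y}"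
proof -
  have "S = (if v\<in>S then {v} else {}) \<union> (if x\<in>S then {x} else {}) \<union> (if y\<in>S then {y} else {})"
    using assms(1) by auto
  then show ?thesis using assms(2-5) by (auto split: if_splits)
qed

lemma inner_mem: "InnerV w S \<in> inner_set E v \<longleftrightarrow> w = v \<and> S \<subseteq> nbrs E v \<and> even (card S)"
  by (auto simp: inner_set_def)
lemma outer_not_inner: "OuterV a b c \<notin> inner_set E v"
  by (auto simp: inner_set_def)
lemma inner_not_outer: "InnerV a b \<notin> outer_set E v"
  by (auto simp: outer_set_def)
lemma outer_mem: "OuterV w t i \<in> outer_set E v \<longleftrightarrow> w = v \<and> t \<in> nbrs E v"
  by (auto simp: outer_set_def)

lemma X_Inner: "InnerV w S \<in> Xset U V E \<longleftrightarrow> w \<in> U \<and> S \<subseteq> nbrs E w \<and> even (card S)"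
  by (auto simp: Xset_def inner_mem inner_not_outer)
lemma X_Outer: "OuterV w t i \<in> Xset U V E \<longleftrightarrow> w \<in> V \<and> t \<in> nbrs E w"
  by (auto simp: Xset_def outer_mem outer_not_inner)
lemma Y_Inner: "InnerV w S \<in> Yset U V E \<longleftrightarrow> w \<in> V \<and> S \<subseteq> nbrs E w \<and> even (card S)"
  by (auto simp: Yset_def inner_mem inner_not_outer)
lemma Y_Outer: "OuterV w t i \<in> Yset U V E \<longleftrightarrow> w \<in> U \<and> t \<in> nbrs E w"
  by (auto simp: Yset_def outer_mem outer_not_inner)

lemma hadj_inner: "hadj E (InnerV w S) z \<longleftrightarrow>
  (\<exists>t i. z = OuterV w t i \<and> S \<subseteq> nbrs E w \<and> even (card S) \<and> t \<in> nbrs E w \<and> (i \<longleftrightarrow> t \<in> S))"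
  by (auto simp: hadj_def gadj0_def)

locale G =
  fixes U V :: "'v set" and E :: "'v \<Rightarrow> 'v \<Rightarrow> bool" and n :: nat
    and \<eta> \<eta>' :: "'v hvert \<Rightarrow> nat"
  assumes cb: "cubic_bipartite U V E"
    and bx: "bij_betw \<eta> (Xset U V E) {0..<n}"
    and by': "bij_betw \<eta>' (Yset U V E) {0..<n}"
begin

abbreviation "X \<equiv> Xset U V E"
abbreviation "Y \<equiv> Yset U V E"
definition "\<iota> = the_inv_into X \<eta>"
definition "\<iota>' = the_inv_into Y \<eta>'"
definition "Phi \<mu> = (\<lambda>i. if i < n then \<eta>' (\<mu> (\<iota> i)) else i)"
definition "Psi p = restrict (\<lambda>x. \<iota>' (p (\<eta> x))) X"
abbreviation "PM \<equiv> perfect_matchings U V E"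
abbreviation "UM \<equiv> uniform_matchings U V E"
abbreviation "msign \<equiv> matching_sign U V E n \<eta> \<eta>'"
definition "Pn = {p. p permutes {0..<n} \<and> (\<forall>i<n. hadj E (\<iota> i) (\<iota>' (p i)))}"

lemma msign_Phi: "msign \<mu> = sign (Phi \<mu>)"
  unfolding matching_sign_def Phi_def \<iota>_def ..

lemma finX: "finite X" using bx bij_betw_finite by blast
lemma finY: "finite Y" using by' bij_betw_finite by blast


lemma \<eta>\<iota>: "i < n \<Longrightarrow> \<eta> (\<iota> i) = i"
  unfolding \<iota>_def using bx by (simp add: f_the_inv_into_f_bij_betw)
lemma \<iota>\<eta>: "x \<in> X \<Longrightarrow> \<iota> (\<eta> x) = x"
  unfolding \<iota>_def using bx by (meson bij_betw_def the_inv_into_f_f)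
lemma \<eta>X: "x \<in> X \<Longrightarrow> \<eta> x < n"
  using bx by (meson atLeastLessThan_iff bij_betwE)

lemma \<eta>'\<iota>': "i < n \<Longrightarrow> \<eta>' (\<iota>' i) = i"
  unfolding \<iota>'_def using by' by (simp add: f_the_inv_into_f_bij_betw)
lemma \<iota>'\<eta>': "x \<in> Y \<Longrightarrow> \<iota>' (\<eta>' x) = x"
  unfolding \<iota>'_def using by' by (meson bij_betw_def the_inv_into_f_f)
lemma \<eta>'Y: "x \<in> Y \<Longrightarrow> \<eta>' x < n"
  using by' by (meson atLeastLessThan_iff bij_betwE)
lemma \<eta>_inj: "x \<in> X \<Longrightarrow> y \<in> X \<Longrightarrow> \<eta> x = \<eta> y \<longleftrightarrow> x = y"
  using bx unfolding bij_betw_def inj_on_def by blast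

lemma bij_\<iota>: "bij_betw \<iota> {0..<n} X"
  unfolding \<iota>_def using bx by (rule bij_betw_the_inv_into)
lemma bij_\<iota>': "bij_betw \<iota>' {0..<n} Y"
  unfolding \<iota>'_def using by' by (rule bij_betw_the_inv_into)

lemma \<iota>X: "i < n \<Longrightarrow> \<iota> i \<in> X"
  using bij_\<iota> by (auto dest: bij_betwE)
lemma \<iota>'Y: "i < n \<Longrightarrow> \<iota>' i \<in> Y"
  using bij_\<iota>' by (auto dest: bij_betwE)

lemma Phi_perm:
  assumes "\<mu> \<in> PM" shows "Phi \<mu> permutes {0..<n}"
proof -
  have b: "bij_betw \<mu> X Y" "\<mu> \<in> X \<rightarrow>\<^sub>E Y" using assms unfolding perfect_matchings_def by auto
  have "bij_betw (\<eta>' \<circ> \<mu> \<circ> \<iota>) {0..<n} {0..<n}"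
    using bij_betw_trans[OF bij_betw_trans[OF bij_\<iota> b(1)] by'] by (simp add: comp_assoc)
  then have "bij_betw (Phi \<mu>) {0..<n} {0..<n}"
    by (rule bij_betw_cong[THEN iffD1, rotated]) (simp add: Phi_def)
  then show ?thesis by (rule bij_imp_permutes) (simp add: Phi_def)
qed

lemma Phi_Pn: assumes "\<mu> \<in> PM" shows "Phi \<mu> \<in> Pn"
proof -
  have b: "\<mu> \<in> X \<rightarrow>\<^sub>E Y" "\<forall>x\<in>X. hadj E x (\<mu> x)" using assms unfolding perfect_matchings_def by auto
  have "hadj E (\<iota> i) (\<iota>' (Phi \<mu> i))" if i: "i < n" for i
  proof -
    have "\<mu> (\<iota> i) \<in> Y" using b(1) \<iota>X[OF i] by blast
    then have "\<iota>' (Phi \<mu> i) = \<mu> (\<iota> i)" using i by (simp add: Phi_def \<iota>'\<eta>')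
    then show ?thesis using b(2) \<iota>X[OF i] by simp
  qed
  then show ?thesis unfolding Pn_def using Phi_perm[OF assms] by blast
qed

lemma Psi_PM: assumes "p \<in> Pn" shows "Psi p \<in> PM"
proof -
  have p: "p permutes {0..<n}" "\<forall>i<n. hadj E (\<iota> i) (\<iota>' (p i))" using assms by (auto simp: Pn_def)
  have pb: "bij_betw p {0..<n} {0..<n}" using p(1) by (rule permutes_imp_bij)
  have "bij_betw (\<iota>' \<circ> p \<circ> \<eta>) X Y"
    using bij_betw_trans[OF bij_betw_trans[OF bx pb] bij_\<iota>'] by (simp add: comp_assoc)
  then have b: "bij_betw (Psi p) X Y"
    by (rule bij_betw_cong[THEN iffD1, rotated]) (simp add: Psi_def)
  have pn: "\<And>i. i < n \<Longrightarrow> p i < n" using p(1) by (meson atLeastLessThan_iff permutes_in_image zero_le)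
  show ?thesis unfolding perfect_matchings_def
  proof (intro CollectI conjI ballI)
    show "Psi p \<in> X \<rightarrow>\<^sub>E Y" using pn \<eta>X \<iota>'Y by (auto simp: Psi_def)
    show "bij_betw (Psi p) X Y" by (rule b)
    fix x assume x: "x \<in> X"
    have "hadj E (\<iota> (\<eta> x)) (\<iota>' (p (\<eta> x)))" using p(2) \<eta>X[OF x] by blast
    then show "hadj E x (Psi p x)" using x by (simp add: Psi_def \<iota>\<eta>)
  qed
qed

lemma Phi_Psi: assumes "p \<in> Pn" shows "Phi (Psi p) = p"
proof
  fix k
  have p: "p permutes {0..<n}" using assms by (auto simp: Pn_def)
  show "Phi (Psi p) k = p k"
  proof (cases "k < n")
    case True
    then have pk: "p k < n" using p by (meson atLeastLessThan_iff permutes_in_image zero_le)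
    have "Phi (Psi p) k = \<eta>' (Psi p (\<iota> k))" using True by (simp add: Phi_def)
    also have "\<dots> = \<eta>' (\<iota>' (p k))" using True by (simp add: Psi_def \<iota>X \<eta>\<iota>)
    also have "\<dots> = p k" using pk by (rule \<eta>'\<iota>')
    finally show ?thesis .
  next
    case False
    then have "p k = k" using p by (simp add: permutes_not_in)
    then show ?thesis using False by (simp add: Phi_def)
  qed
qed

lemma Psi_Phi: assumes "\<mu> \<in> PM" shows "Psi (Phi \<mu>) = \<mu>"
proof
  fix x
  have b: "\<mu> \<in> X \<rightarrow>\<^sub>E Y" using assms unfolding perfect_matchings_def by auto
  show "Psi (Phi \<mu>) x = \<mu> x"
  proof (cases "x \<in> X")
    case True
    have "Psi (Phi \<mu>) x = \<iota>' (Phi \<mu> (\<eta> x))" using True by (simp add: Psi_def)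
    also have "\<dots> = \<iota>' (\<eta>' (\<mu> x))" using True by (simp add: Phi_def \<eta>X \<iota>\<eta>)
    also have "\<dots> = \<mu> x" by (rule \<iota>'\<eta>'[OF PiE_mem[OF b True]])
    finally show ?thesis .
  next
    case False
    then show ?thesis using PiE_arb[OF b False] by (simp add: Psi_def)
  qed
qed

lemma det_eq: "det (biadj_matrix U V E n \<eta> \<eta>') = (\<Sum>\<mu>\<in>PM. msign \<mu>)"
proof -
  let ?M = "biadj_matrix U V E n \<eta> \<eta>'"
  let ?P = "{p. p permutes {0..<n}}"
  let ?Q = "\<lambda>p. \<forall>i<n. hadj E (\<iota> i) (\<iota>' (p i))"
  have fin: "finite ?P" by (simp add: finite_permutations)
  have car: "?M \<in> carrier_mat n n" unfolding biadj_matrix_def by simp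
  have "det ?M = (\<Sum>p\<in>?P. of_int (sign p) * (\<Prod>i = 0..<n. ?M $$ (i, p i)))"
    by (rule det_def'[OF car])
  also have "\<dots> = (\<Sum>p\<in>?P. (if ?Q p then sign p else 0))"
  proof (rule sum.cong[OF refl])
    fix p assume "p \<in> ?P"
    then have pp: "p permutes {0..<n}" by simp
    have pn: "p i < n" if "i < n" for i using permutes_in_image[OF pp, of i] that by simp
    have "(\<Prod>i = 0..<n. ?M $$ (i, p i)) = (\<Prod>i = 0..<n. (if hadj E (\<iota> i) (\<iota>' (p i)) then 1 else 0))"
    proof (rule prod.cong[OF refl])
      fix i assume "i \<in> {0..<n}"
      then have i: "i < n" by simp
      show "?M $$ (i, p i) = (if hadj E (\<iota> i) (\<iota>' (p i)) then 1 else 0)"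
        unfolding biadj_matrix_def \<iota>_def \<iota>'_def using i pn[OF i] by (simp only: index_mat) simp
    qed
    also have "\<dots> = (if ?Q p then 1 else 0)"
      by (subst prod_01) auto
    finally show "of_int (sign p) * (\<Prod>i = 0..<n. ?M $$ (i, p i)) = (if ?Q p then sign p else 0)"
      by simp
  qed
  also have "\<dots> = (\<Sum>p\<in>{p\<in>?P. ?Q p}. sign p)"
    by (rule sum.inter_filter[OF fin, symmetric])
  also have "\<dots> = (\<Sum>p\<in>Pn. sign p)" by (simp add: Pn_def)
  also have "\<dots> = (\<Sum>\<mu>\<in>PM. msign \<mu>)"
  proof (rule sum.reindex_bij_witness[where i = Phi and j = Psi])
    fix a assume a: "a \<in> Pn"
    show "Phi (Psi a) = a" using a by (rule Phi_Psi)
    show "Psi a \<in> PM" using a by (rule Psi_PM)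
    show "msign (Psi a) = sign a" unfolding msign_Phi using Phi_Psi[OF a] by simp
  next
    fix b assume b: "b \<in> PM"
    show "Psi (Phi b) = b" using b by (rule Psi_Phi)
    show "Phi b \<in> Pn" using b by (rule Phi_Pn)
  qed
  finally show ?thesis .
qed


lemma cbf: "finite U" "finite V" "U \<inter> V = {}" "\<And>u v. E u v \<Longrightarrow> E v u"
  "\<And>u v. E u v \<Longrightarrow> (u \<in> U \<and> v \<in> V) \<or> (u \<in> V \<and> v \<in> U)"
  "\<And>v. v \<in> U \<union> V \<Longrightarrow> card (nbrs E v) = 3"
  using cb unfolding cubic_bipartite_def by blast+

definition bad where
  "bad \<mu> u v \<longleftrightarrow> u \<in> U \<and> E u v \<and> \<mu> (OuterV v u False) = OuterV u v False \<and> \<mu> (OuterV v u True) = OuterV u v True"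

lemma im_UV: assumes "u \<in> U" "E u v"
  shows "in_matching X \<mu> (OuterV v u i) (OuterV u v i) \<longleftrightarrow> \<mu> (OuterV v u i) = OuterV u v i"
proof -
  have "v \<in> V" using assms cbf(3,5) by blast
  moreover have "u \<notin> V" using assms cbf(3) by blast
  moreover have "E v u" using assms cbf(4) by blast
  ultimately show ?thesis by (auto simp: in_matching_def X_Outer nbrs_def)
qed

lemma im_VU: assumes "u \<in> V" "E u v"
  shows "in_matching X \<mu> (OuterV v u i) (OuterV u v i) \<longleftrightarrow> \<mu> (OuterV u v i) = OuterV v u i"
proof -
  have "v \<in> U" using assms cbf(3,5) by blast
  moreover have "v \<notin> V" using calculation cbf(3) by blast
  ultimately show ?thesis using assms by (auto simp: in_matching_def X_Outer nbrs_def)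
qed

lemma UM_iff: assumes "\<mu> \<in> PM" shows "\<mu> \<in> UM \<longleftrightarrow> \<not> (\<exists>u v. bad \<mu> u v)"
proof
  assume "\<mu> \<in> UM"
  then have h: "\<And>u v. E u v \<Longrightarrow> \<not> (in_matching X \<mu> (OuterV v u False) (OuterV u v False) \<and>
          in_matching X \<mu> (OuterV v u True) (OuterV u v True))"
    unfolding uniform_matchings_def by blast
  show "\<not> (\<exists>u v. bad \<mu> u v)"
  proof
    assume "\<exists>u v. bad \<mu> u v"
    then obtain u v where b: "bad \<mu> u v" by blast
    then have "u \<in> U" "E u v" by (auto simp: bad_def)
    then show False using h[of u v] b by (simp add: im_UV bad_def)
  qed
next
  assume nb: "\<not> (\<exists>u v. bad \<mu> u v)"
  have "\<not> (in_matching X \<mu> (OuterV v u False) (OuterV u v False) \<and>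
          in_matching X \<mu> (OuterV v u True) (OuterV u v True))" if e: "E u v" for u v
  proof (cases "u \<in> U")
    case True
    then show ?thesis using nb e by (simp add: im_UV bad_def)
  next
    case False
    then have "u \<in> V" "v \<in> U" "E v u" using e cbf(4,5) by blast+
    then show ?thesis using nb e by (simp add: im_VU bad_def)
  qed
  then show "\<mu> \<in> UM" using assms unfolding uniform_matchings_def by blast
qed

lemma bad_flip: "bad (flip E a b \<mu>) u v = bad \<mu> u v"
  by (simp add: bad_def flip_def outer_not_inner)


lemma PM_D: assumes "\<mu> \<in> PM"
  shows "\<mu> \<in> X \<rightarrow>\<^sub>E Y" "bij_betw \<mu> X Y" "\<And>x. x \<in> X \<Longrightarrow> hadj E x (\<mu> x)" "inj_on \<mu> X"
  using assms unfolding perfect_matchings_def bij_betw_def by auto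

lemma core:
  assumes mu: "\<mu> \<in> PM" and bd: "bad \<mu> u v" and N: "nbrs E u = {v,x,y}"
    and d: "v \<noteq> x" "v \<noteq> y" "x \<noteq> y"
    and m00: "\<mu> (InnerV u {}) = OuterV u x False"
  shows "flip E u v \<mu> \<in> PM \<and> msign (flip E u v \<mu>) = - msign \<mu> \<and> flip E u v (flip E u v \<mu>) = \<mu>"
proof -
  have uU: "u \<in> U" and Euv: "E u v" and mv0: "\<mu> (OuterV v u False) = OuterV u v False"
    and mv1: "\<mu> (OuterV v u True) = OuterV u v True" using bd by (auto simp: bad_def)
  have vV: "v \<in> V" using uU Euv cbf(3,5) by blast
  have Evu: "E v u" using Euv cbf(4) by blast
  note P = PM_D[OF mu]
  define a00 where "a00 = InnerV u ({}::'v set)"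
  define a11 where "a11 = InnerV u {x,y}"
  define a10 where "a10 = InnerV u {v,x}"
  define a01 where "a01 = InnerV u {v,y}"
  have cxy: "card {x,y} = 2" "card {v,x} = 2" "card {v,y} = 2" using d by auto
  have aX: "a00 \<in> X" "a11 \<in> X" "a10 \<in> X" "a01 \<in> X"
    unfolding a00_def a11_def a10_def a01_def using uU N cxy by (auto simp: X_Inner)
  have oX: "OuterV v u b \<in> X" for b using vV Evu by (simp add: X_Outer nbrs_def)
  have ne: "\<mu> a \<noteq> \<mu> b" if "a \<in> X" "b \<in> X" "a \<noteq> b" for a b
    using P(4) that by (meson inj_onD)
  have adj: "hadj E a (\<mu> a)" if "a \<in> X" for a using P(3) that by blast
  have sne: "{x,y} \<noteq> {v,x}" "{x,y} \<noteq> {v,y}" "{v,x} \<noteq> {v,y}" using d by auto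
  have dist: "a00 \<noteq> a11" "a00 \<noteq> a10" "a00 \<noteq> a01" "a11 \<noteq> a10" "a11 \<noteq> a01" "a10 \<noteq> a01"
    unfolding a00_def a11_def a10_def a01_def using sne by auto
  have m01: "\<mu> a01 = OuterV u y True"
  proof -
    have n1: "\<mu> a01 \<noteq> OuterV u v True" using ne[OF aX(4) oX[of True]] mv1 by (auto simp: a01_def)
    have n2: "\<mu> a01 \<noteq> OuterV u x False" using ne[OF aX(4) aX(1)] dist m00 by (auto simp: a00_def)
    show ?thesis using adj[OF aX(4)] n1 n2 N d unfolding a01_def hadj_inner by auto
  qed
  have m11: "\<mu> a11 = OuterV u x True"
  proof -
    have n1: "\<mu> a11 \<noteq> OuterV u v False" using ne[OF aX(2) oX[of False]] mv0 by (auto simp: a11_def)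
    have n2: "\<mu> a11 \<noteq> OuterV u y True" using ne[OF aX(2) aX(4)] dist m01 by auto
    show ?thesis using adj[OF aX(2)] n1 n2 N d unfolding a11_def hadj_inner by auto
  qed
  have m10: "\<mu> a10 = OuterV u y False"
  proof -
    have n1: "\<mu> a10 \<noteq> OuterV u v True" using ne[OF aX(3) oX[of True]] mv1 by (auto simp: a10_def)
    have n2: "\<mu> a10 \<noteq> OuterV u x True" using ne[OF aX(3) aX(2)] dist m11 by auto
    show ?thesis using adj[OF aX(3)] n1 n2 N d unfolding a10_def hadj_inner by auto
  qed
  have m00': "\<mu> a00 = OuterV u x False" using m00 by (simp add: a00_def)
  have IS: "inner_set E u = {a00, a11, a10, a01}"
  proof
    show "inner_set E u \<subseteq> {a00, a11, a10, a01}"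
    proof
      fix z assume "z \<in> inner_set E u"
      then obtain S where z: "z = InnerV u S" "S \<subseteq> {v,x,y}" "even (card S)"
        using N by (auto simp: inner_set_def)
      then show "z \<in> {a00, a11, a10, a01}" using even_sub3[OF z(2) d z(3)]
        unfolding a00_def a11_def a10_def a01_def by auto
    qed
    show "{a00, a11, a10, a01} \<subseteq> inner_set E u"
      unfolding a00_def a11_def a10_def a01_def using N cxy by (auto simp: inner_set_def)
  qed
  have C: "cand E u v S = {OuterV u x (x \<in> S), OuterV u y (y \<in> S)}" for S
    using cand_eq[OF N] d by auto
  have f00: "flip E u v \<mu> a00 = OuterV u y False"
    using m00' d unfolding flip_def IS C by (simp add: a00_def insert_Diff_if)
  have f01: "flip E u v \<mu> a01 = OuterV u x False"
    using m01 d unfolding flip_def IS C by (simp add: a01_def insert_Diff_if)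
  have f11: "flip E u v \<mu> a11 = OuterV u y True"
    using m11 d unfolding flip_def IS C by (simp add: a11_def insert_Diff_if)
  have f10: "flip E u v \<mu> a10 = OuterV u x True"
    using m10 d unfolding flip_def IS C by (simp add: a10_def insert_Diff_if)
  have ff00: "flip E u v (flip E u v \<mu>) a00 = \<mu> a00"
    using f00 m00' d unfolding flip_def[of E u v "flip E u v \<mu>"] IS C by (simp add: a00_def insert_Diff_if)
  have ff01: "flip E u v (flip E u v \<mu>) a01 = \<mu> a01"
    using f01 m01 d unfolding flip_def[of E u v "flip E u v \<mu>"] IS C by (simp add: a01_def insert_Diff_if)
  have ff11: "flip E u v (flip E u v \<mu>) a11 = \<mu> a11"
    using f11 m11 d unfolding flip_def[of E u v "flip E u v \<mu>"] IS C by (simp add: a11_def insert_Diff_if)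
  have ff10: "flip E u v (flip E u v \<mu>) a10 = \<mu> a10"
    using f10 m10 d unfolding flip_def[of E u v "flip E u v \<mu>"] IS C by (simp add: a10_def insert_Diff_if)
  have fo: "flip E u v \<mu> z = \<mu> z" if "z \<notin> {a00, a11, a10, a01}" for z
    using that unfolding flip_def IS by simp
  have ff: "flip E u v (flip E u v \<mu>) = \<mu>"
  proof
    fix z
    show "flip E u v (flip E u v \<mu>) z = \<mu> z"
    proof (cases "z \<in> {a00, a11, a10, a01}")
      case True then show ?thesis using ff00 ff01 ff11 ff10 by auto
    next
      case False
      have "flip E u v (flip E u v \<mu>) z = flip E u v \<mu> z" using False unfolding flip_def[of E u v "flip E u v \<mu>"] IS by simp
      then show ?thesis using fo[OF False] by simp
    qed
  qed
  define i00 where "i00 = \<eta> a00"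
  define i11 where "i11 = \<eta> a11"
  define i10 where "i10 = \<eta> a10"
  define i01 where "i01 = \<eta> a01"
  have ilt: "i00 < n" "i11 < n" "i10 < n" "i01 < n" unfolding i00_def i11_def i10_def i01_def using aX \<eta>X by auto
  have idist: "i00 \<noteq> i11" "i00 \<noteq> i10" "i00 \<noteq> i01" "i11 \<noteq> i10" "i11 \<noteq> i01" "i10 \<noteq> i01"
    unfolding i00_def i11_def i10_def i01_def using aX dist \<eta>_inj by auto
  note idist' = idist idist[symmetric]
  define \<pi> where "\<pi> = transpose i00 i01 \<circ> transpose i00 i11 \<circ> transpose i00 i10"
  have \<pi>v: "\<pi> i00 = i10" "\<pi> i10 = i11" "\<pi> i11 = i01" "\<pi> i01 = i00"
    unfolding \<pi>_def using idist' by (auto simp: transpose_def)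
  have \<pi>o: "\<pi> j = j" if "j \<notin> {i00, i11, i10, i01}" for j
    unfolding \<pi>_def using that by (auto simp: transpose_def)
  have \<pi>perm: "\<pi> permutes {0..<n}"
    unfolding \<pi>_def using ilt by (intro permutes_compose permutes_swap_id) auto
  have \<pi>lt: "\<pi> j < n" if "j < n" for j using permutes_in_image[OF \<pi>perm, of j] that by simp
  have \<iota>\<eta>a: "\<iota> i00 = a00" "\<iota> i11 = a11" "\<iota> i10 = a10" "\<iota> i01 = a01"
    unfolding i00_def i11_def i10_def i01_def using aX \<iota>\<eta> by auto
  have key: "flip E u v \<mu> z = \<mu> (\<iota> (\<pi> (\<eta> z)))" if z: "z \<in> X" for z
  proof (cases "z \<in> {a00, a11, a10, a01}")
    case True
    then have "z = a00 \<or> z = a11 \<or> z = a10 \<or> z = a01" by auto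
    then show ?thesis
    proof (elim disjE)
      assume "z = a00" then show ?thesis using f00 m10 \<pi>v(1) \<iota>\<eta>a(3) by (simp add: i00_def[symmetric])
    next
      assume "z = a10" then show ?thesis using f10 m11 \<pi>v(2) \<iota>\<eta>a(2) by (simp add: i10_def[symmetric])
    next
      assume "z = a11" then show ?thesis using f11 m01 \<pi>v(3) \<iota>\<eta>a(4) by (simp add: i11_def[symmetric])
    next
      assume "z = a01" then show ?thesis using f01 m00' \<pi>v(4) \<iota>\<eta>a(1) by (simp add: i01_def[symmetric])
    qed
  next
    case False
    then have "\<eta> z \<notin> {i00, i11, i10, i01}"
      unfolding i00_def i11_def i10_def i01_def using z aX \<eta>_inj by auto
    then have "\<pi> (\<eta> z) = \<eta> z" by (rule \<pi>o)
    then show ?thesis using fo[OF False] \<iota>\<eta>[OF z] by simp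
  qed
  have fPi: "flip E u v \<mu> \<in> X \<rightarrow>\<^sub>E Y"
  proof (rule PiE_I)
    fix z assume z: "z \<in> X"
    have "\<iota> (\<pi> (\<eta> z)) \<in> X" using \<iota>X \<pi>lt \<eta>X z by blast
    then show "flip E u v \<mu> z \<in> Y" using key[OF z] PiE_mem[OF P(1)] by simp
  next
    fix z assume z: "z \<notin> X"
    then have "z \<notin> {a00, a11, a10, a01}" using aX by auto
    then show "flip E u v \<mu> z = undefined" using fo PiE_arb[OF P(1) z] by simp
  qed
  have "bij_betw (\<mu> \<circ> \<iota> \<circ> \<pi> \<circ> \<eta>) X Y"
    using bij_betw_trans[OF bij_betw_trans[OF bij_betw_trans[OF bx permutes_imp_bij[OF \<pi>perm]] bij_\<iota>] P(2)]
    by (simp add: comp_assoc)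
  then have fbij: "bij_betw (flip E u v \<mu>) X Y"
    by (rule bij_betw_cong[THEN iffD1, rotated]) (simp add: key)
  have fadj: "hadj E z (flip E u v \<mu> z)" if z: "z \<in> X" for z
  proof (cases "z \<in> {a00, a11, a10, a01}")
    case True
    then have "z = a00 \<or> z = a11 \<or> z = a10 \<or> z = a01" by auto
    then show ?thesis
    proof (elim disjE)
      assume z0: "z = a00"
      have "hadj E a00 (OuterV u y False)" unfolding a00_def hadj_inner
        by (intro exI[of _ y] exI[of _ False]) (simp add: N d)
      then show ?thesis using f00 z0 by simp
    next
      assume z0: "z = a10"
      have "hadj E a10 (OuterV u x True)" unfolding a10_def hadj_inner
        by (intro exI[of _ x] exI[of _ True]) (simp add: N d cxy)
      then show ?thesis using f10 z0 by simp
    next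
      assume z0: "z = a11"
      have "hadj E a11 (OuterV u y True)" unfolding a11_def hadj_inner
        by (intro exI[of _ y] exI[of _ True]) (simp add: N d cxy)
      then show ?thesis using f11 z0 by simp
    next
      assume z0: "z = a01"
      have "hadj E a01 (OuterV u x False)" unfolding a01_def hadj_inner
        using d by (intro exI[of _ x] exI[of _ False]) (auto simp add: N cxy)
      then show ?thesis using f01 z0 by simp
    qed
  next
    case False
    then show ?thesis using fo adj z by simp
  qed
  have fPM: "flip E u v \<mu> \<in> PM"
    unfolding perfect_matchings_def using fPi fbij fadj by blast
  have PhiC: "Phi (flip E u v \<mu>) = Phi \<mu> \<circ> \<pi>"
  proof
    fix i
    show "Phi (flip E u v \<mu>) i = (Phi \<mu> \<circ> \<pi>) i"
    proof (cases "i < n")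
      case True
      have "flip E u v \<mu> (\<iota> i) = \<mu> (\<iota> (\<pi> i))" using key[OF \<iota>X[OF True]] \<eta>\<iota>[OF True] by simp
      then show ?thesis using True \<pi>lt[OF True] by (simp add: Phi_def)
    next
      case False
      then have "i \<notin> {i00, i11, i10, i01}" using ilt by auto
      then have "\<pi> i = i" by (rule \<pi>o)
      then show ?thesis using False by (simp add: Phi_def)
    qed
  qed
  have sp: "sign \<pi> = -1"
    unfolding \<pi>_def using idist
    by (simp add: sign_compose permutation_swap_id permutation_compose sign_swap_id)
  have pP: "permutation (Phi \<mu>)" using Phi_perm[OF mu] by (rule permutes_imp_permutation[rotated]) simp
  have pp: "permutation \<pi>" using \<pi>perm by (rule permutes_imp_permutation[rotated]) simp
  have "msign (flip E u v \<mu>) = - msign \<mu>"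
    unfolding msign_Phi PhiC using sign_compose[OF pP pp] sp by simp
  then show ?thesis using fPM ff by blast
qed


lemma gadget:
  assumes mu: "\<mu> \<in> PM" and bd: "bad \<mu> u v"
  shows "flip E u v \<mu> \<in> PM \<and> msign (flip E u v \<mu>) = - msign \<mu> \<and> flip E u v (flip E u v \<mu>) = \<mu>"
proof -
  have uU: "u \<in> U" and Euv: "E u v" and mv0: "\<mu> (OuterV v u False) = OuterV u v False"
    using bd by (auto simp: bad_def)
  have vV: "v \<in> V" using uU Euv cbf(3,5) by blast
  have Evu: "E v u" using Euv cbf(4) by blast
  have c3: "card (nbrs E u) = 3" using cbf(6) uU by blast
  have vn: "v \<in> nbrs E u" using Euv by (simp add: nbrs_def)
  have fin: "finite (nbrs E u)" using c3 by (metis card.infinite zero_neq_numeral)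
  have "card (nbrs E u - {v}) = 2" using c3 vn fin by simp
  then obtain x' y' where xy: "nbrs E u - {v} = {x', y'}" "x' \<noteq> y'" by (auto simp: card_2_iff)
  have N: "nbrs E u = {v, x', y'}" using xy(1) vn by blast
  have d: "v \<noteq> x'" "v \<noteq> y'" using xy(1) by blast+
  note P = PM_D[OF mu]
  have a0X: "InnerV u {} \<in> X" using uU by (simp add: X_Inner)
  have oX: "OuterV v u False \<in> X" using vV Evu by (simp add: X_Outer nbrs_def)
  obtain t where t: "\<mu> (InnerV u {}) = OuterV u t False" "t \<in> nbrs E u"
    using P(3)[OF a0X] unfolding hadj_inner by auto
  have "t \<noteq> v"
  proof
    assume "t = v"
    then have "\<mu> (InnerV u {}) = \<mu> (OuterV v u False)" using t mv0 by simp
    then have "InnerV u {} = OuterV v u False" using P(4) a0X oX by (meson inj_onD)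
    then show False by simp
  qed
  then have "t = x' \<or> t = y'" using t(2) N by blast
  then show ?thesis
  proof
    assume "t = x'"
    then show ?thesis using core[OF mu bd N d xy(2)] t by simp
  next
    assume "t = y'"
    moreover have "nbrs E u = {v, y', x'}" using N by blast
    ultimately show ?thesis using core[OF mu bd _ d(2,1) xy(2)[symmetric]] t by simp
  qed
qed

definition "key \<mu> = (SOME p. bad \<mu> (fst p) (snd p))"
definition "tau \<mu> = flip E (fst (key \<mu>)) (snd (key \<mu>)) \<mu>"

lemma tau_props:
  assumes mu: "\<mu> \<in> PM - UM"
  shows "tau \<mu> \<in> PM - UM \<and> tau (tau \<mu>) = \<mu> \<and> msign (tau \<mu>) = - msign \<mu>"
proof -
  have pm: "\<mu> \<in> PM" using mu by blast
  then have "\<exists>u v. bad \<mu> u v" using UM_iff mu by blast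
  then have "\<exists>p. bad \<mu> (fst p) (snd p)" by auto
  then have bk: "bad \<mu> (fst (key \<mu>)) (snd (key \<mu>))" unfolding key_def by (rule someI_ex)
  note g = gadget[OF pm bk]
  have kk: "key (tau \<mu>) = key \<mu>" unfolding key_def tau_def bad_flip ..
  have t1: "tau \<mu> \<in> PM" using g unfolding tau_def by blast
  have "bad (tau \<mu>) (fst (key \<mu>)) (snd (key \<mu>))" unfolding tau_def bad_flip by (rule bk)
  then have t2: "tau \<mu> \<notin> UM" using UM_iff[OF t1] by blast
  have "tau (tau \<mu>) = \<mu>" unfolding tau_def[of "tau \<mu>"] kk using g unfolding tau_def by blast
  then show ?thesis using t1 t2 g unfolding tau_def by blast
qed

lemma finPM: "finite PM"
proof -
  have "PM \<subseteq> X \<rightarrow>\<^sub>E Y" unfolding perfect_matchings_def by blast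
  then show ?thesis using finite_PiE[OF finX, of "\<lambda>_. Y"] finY finite_subset by blast
qed

lemma NU_zero: "(\<Sum>\<mu>\<in>PM - UM. msign \<mu>) = 0"
proof -
  have "(\<Sum>\<mu>\<in>PM - UM. msign \<mu>) = (\<Sum>\<mu>\<in>PM - UM. - msign \<mu>)"
  proof (rule sum.reindex_bij_witness[where i = tau and j = tau])
    fix a assume a: "a \<in> PM - UM"
    note tp = tau_props[OF a]
    show "tau (tau a) = a" using tp by blast
    show "tau a \<in> PM - UM" using tp by blast
    show "- msign (tau a) = msign a" using tp by simp
  qed (use tau_props in blast)+
  also have "\<dots> = - (\<Sum>\<mu>\<in>PM - UM. msign \<mu>)" by (simp add: sum_negf)
  finally show ?thesis by simp
qed

lemma UM_sum: "(\<Sum>\<mu>\<in>UM. msign \<mu>) =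
   int (card {\<mu> \<in> UM. msign \<mu> = 1}) - int (card {\<mu> \<in> UM. msign \<mu> = -1})"
proof -
  have fU: "finite UM" using finPM finite_subset unfolding uniform_matchings_def by fastforce
  have split: "UM = {\<mu> \<in> UM. msign \<mu> = 1} \<union> {\<mu> \<in> UM. msign \<mu> = -1}"
  proof -
    have "msign \<mu> = 1 \<or> msign \<mu> = -1" for \<mu>
      by (cases rule: sign_cases[of "Phi \<mu>"]) (simp_all add: msign_Phi)
    then show ?thesis by blast
  qed
  have "(\<Sum>\<mu>\<in>UM. msign \<mu>) = (\<Sum>\<mu>\<in>{\<mu> \<in> UM. msign \<mu> = 1}. msign \<mu>) + (\<Sum>\<mu>\<in>{\<mu> \<in> UM. msign \<mu> = -1}. msign \<mu>)"
    by (subst split, rule sum.union_disjoint) (use fU in auto)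
  also have "(\<Sum>\<mu>\<in>{\<mu> \<in> UM. msign \<mu> = 1}. msign \<mu>) = (\<Sum>\<mu>\<in>{\<mu> \<in> UM. msign \<mu> = 1}. 1)"
    by (rule sum.cong) auto
  also have "(\<Sum>\<mu>\<in>{\<mu> \<in> UM. msign \<mu> = -1}. msign \<mu>) = (\<Sum>\<mu>\<in>{\<mu> \<in> UM. msign \<mu> = -1}. -1)"
    by (rule sum.cong) auto
  finally show ?thesis by simp
qed

lemma main: "det (biadj_matrix U V E n \<eta> \<eta>') =
   int (card {\<mu> \<in> UM. msign \<mu> = 1}) - int (card {\<mu> \<in> UM. msign \<mu> = -1})"
proof -
  have sub: "UM \<subseteq> PM" unfolding uniform_matchings_def by blast
  have "det (biadj_matrix U V E n \<eta> \<eta>') = (\<Sum>\<mu>\<in>PM. msign \<mu>)" by (rule det_eq)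
  also have "\<dots> = (\<Sum>\<mu>\<in>PM - UM. msign \<mu>) + (\<Sum>\<mu>\<in>UM. msign \<mu>)"
    by (rule sum.subset_diff[OF sub finPM])
  also have "\<dots> = (\<Sum>\<mu>\<in>UM. msign \<mu>)" using NU_zero by simp
  finally show ?thesis using UM_sum by simp
qed

end

theorem mainTheorem2:
  fixes U V :: "'v set" and E :: "'v \<Rightarrow> 'v \<Rightarrow> bool"
    and m n :: nat and \<eta> \<eta>' :: "'v hvert \<Rightarrow> nat"
  assumes "cubic_bipartite U V E"
    and "m = card U" and "m = card V" and "n = 10 * m"
    and "bij_betw \<eta> (Xset U V E) {0..<n}"
    and "bij_betw \<eta>' (Yset U V E) {0..<n}"
  shows "det (biadj_matrix U V E n \<eta> \<eta>') =
     int (card {\<mu> \<in> uniform_matchings U V E. matching_sign U V E n \<eta> \<eta>' \<mu> = 1})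
   - int (card {\<mu> \<in> uniform_matchings U V E. matching_sign U V E n \<eta> \<eta>' \<mu> = -1})"
proof -
  interpret G U V E n \<eta> \<eta>' using assms(1,5,6) by unfold_locales
  show ?thesis by (rule main)
qed

end
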